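(* Suppose Assumption 1 holds and let $(f_t)_{t\in\mathbb N}$ be the online gradient descent iterates with step sizes satisfying $\lim_{t\to\infty}\eta_t=0$. Then there exist constants $\widehat C,\gamma>0$ independent of $t$ such that for every $t\in\mathbb N$, $$\mathbb E\big[\|f_t-f_H\|^2\big]\le\widehat C+\gamma\sum_{k=1}^t\eta_k^2\qquad\text{and}\qquad\mathbb E\big[\|\nabla\mathcal E(f_t)\|^2\big]\ge\frac{\big(\mathbb E[\mathcal E(f_t)-\mathcal E(f_H)]\big)^2}{\widehat C+\gamma\sum_{k=1}^t\eta_k^2}.$$
   Context: Setting: Let $\mathcal X\subset\mathbb R^d$, $\mathcal Y\subset\mathbb R$, $\mathcal Z=\mathcal X\times\mathcal Y$, and let $\rho$ be a Borel probability measure on $\mathcal Z$. Let $K:\mathcal X\times\mathcal X\to\mathbb R$ be a continuous, symmetric, positive semi-definite kernel with reproducing kernel Hilbert space $H_K$ (inner product $\langle\cdot,\cdot\rangle$, norm $\|\cdot\|$), $K_x:=K(x,\cdot)$, reproducing property $f(x)=\langle f,K_x\rangle$, and $\kappa:=\sup_{x\in\mathcal X}\sqrt{K(x,x)}<\infty$. Let $\phi:\mathcal Y\times\mathbb R\to[0,\infty)$ be a loss function, differentiable in its second argument, and write $\phi'(y,s)$ for its derivative with respect to $s$. The generalization error of $f:\mathcal X\to\mathbb R$ is $\mathcal E(f)=\int_{\mathcal Z}\phi(y,f(x))\,d\rho(x,y)$. It is assumed that a minimizer $f_H\in\arg\min_{f\in H_K}\mathcal E(f)$ exists and that $\max\{\sup_{y\in\mathcal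 Y}\phi(y,0),\ \sup_{(x,y)\in\mathcal Z}\phi(y,f_H(x))\}<\infty$. Let $z_t=(x_t,y_t)$, $t\in\mathbb N$, be i.i.d. samples from $\rho$, let $(\eta_t)_{t\in\mathbb N}$ be positive step sizes, and define the online gradient descent iterates by $f_1=0$ and $f_{t+1}=f_t-\eta_t\phi'(y_t,f_t(x_t))K_{x_t}$ for $t\in\mathbb N$ (so $f_t$ depends only on $z_1,\dots,z_{t-1}$). Assumption 1: for every $y\in\mathcal Y$, $\phi(y,\cdot)$ is convex and differentiable, and there are constants $\alpha\in(0,1]$, $L>0$ with $|\phi'(y,s)-\phi'(y,\tilde s)|\le L|s-\tilde s|^{\alpha}$ for all $s,\tilde s\in\mathbb R$, $y\in\mathcal Y$. $\nabla\mathcal E(f)=\mathbb E_{(x,y)\sim\rho}[\phi'(y,f(x))K_x]\in H_K$ denotes the gradient of $\mathcal E$ at $f\in H_K$. *)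

theory Defs
  imports "HOL-Probability.Probability"
begin

text \<open>The RKHS H_K is represented as a Hilbert space type 'h with feature map
  Phi (Phi x = K_x); a function f in H_K is evaluated as f(x) = inner f (Phi x),
  and K(x,x') = inner (Phi x) (Phi x').\<close>

definition gen_err ::
  "('a \<times> real) measure \<Rightarrow> (real \<Rightarrow> real \<Rightarrow> real) \<Rightarrow> ('a \<Rightarrow> 'h::real_inner) \<Rightarrow> 'h \<Rightarrow> real" where
  "gen_err \<rho> \<phi> \<Phi> f = (\<integral>z. \<phi> (snd z) (inner f (\<Phi> (fst z))) \<partial>\<rho>)"

definition grad_err ::
  "('a \<times> real) measure \<Rightarrow> (real \<Rightarrow> real \<Rightarrow> real) \<Rightarrow>
     ('a \<Rightarrow> 'h::{real_inner, complete_space, second_countable_topology}) \<Rightarrow> 'h \<Rightarrow> 'h" where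
  "grad_err \<rho> \<phi>' \<Phi> f = (\<integral>z. \<phi>' (snd z) (inner f (\<Phi> (fst z))) *\<^sub>R \<Phi> (fst z) \<partial>\<rho>)"

text \<open>Online gradient descent iterates: ogd ... z 1 = 0 and, for t >= 1,
  ogd ... z (t+1) = ogd ... z t - eta t * phi'(y_t, f_t(x_t)) K_{x_t}.
  The value at index 0 is an unused dummy.\<close>

primrec ogd ::
  "(real \<Rightarrow> real \<Rightarrow> real) \<Rightarrow> ('a \<Rightarrow> 'h::real_inner) \<Rightarrow> (nat \<Rightarrow> real) \<Rightarrow> (nat \<Rightarrow> 'a \<times> real) \<Rightarrow> nat \<Rightarrow> 'h" where
  "ogd \<phi>' \<Phi> \<eta> z 0 = 0"
| "ogd \<phi>' \<Phi> \<eta> z (Suc t) =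
     (if t = 0 then 0
      else ogd \<phi>' \<Phi> \<eta> z t
           - (\<eta> t * \<phi>' (snd (z t)) (inner (ogd \<phi>' \<Phi> \<eta> z t) (\<Phi> (fst (z t))))) *\<^sub>R \<Phi> (fst (z t)))"

end

theory Submission
  imports Defs
begin


lemma self_bound:
  fixes f f' :: "real \<Rightarrow> real" and L \<alpha> s :: real
  assumes nonneg: "\<And>s. 0 \<le> f s"
    and deriv: "\<And>s. (f has_real_derivative f' s) (at s)"
    and hold: "\<And>s s'. \<bar>f' s - f' s'\<bar> \<le> L * \<bar>s - s'\<bar> powr \<alpha>"
    and a: "0 < \<alpha>" "\<alpha> \<le> 1" and L: "0 < L"
  shows "(f' s)\<^sup>2 \<le> (1 + 2 * (2*L) powr (1/\<alpha>)) * (1 + f s)"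
proof -
  define g where "g = \<bar>f' s\<bar>"
  define c where "c = (2*L) powr (1/\<alpha>)"
  have c0: "c > 0" using L by (simp add: c_def)
  have fs0: "0 \<le> f s" by (rule nonneg)
  have expand: "(1 + 2 * c) * (1 + f s) = 1 + f s + 2 * c + 2 * c * f s" by (simp add: algebra_simps)
  show ?thesis
  proof (cases "g \<le> 1")
    case True
    have "(f' s)\<^sup>2 = g\<^sup>2" by (simp add: g_def)
    also have "\<dots> \<le> 1" using True by (simp add: g_def abs_square_le_1)
    also have "1 \<le> (1 + 2 * c) * (1 + f s)" using c0 fs0 expand by (simp add: mult_nonneg_nonneg)
    finally show ?thesis by (simp add: c_def)
  next
    case False
    hence g1: "g > 1" by simp
    define u where "u = (g/(2*L)) powr (1/\<alpha>)"
    have u0: "u > 0" using g1 L by (simp add: u_def)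
    have upow: "u powr \<alpha> = g/(2*L)"
      unfolding u_def using g1 L a by (simp add: powr_powr)
    have close: "\<And>\<xi>. \<bar>\<xi> - s\<bar> \<le> u \<Longrightarrow> \<bar>f' \<xi> - f' s\<bar> \<le> g/2"
    proof -
      fix \<xi> assume "\<bar>\<xi> - s\<bar> \<le> u"
      hence "\<bar>\<xi> - s\<bar> powr \<alpha> \<le> u powr \<alpha>" using a by (intro powr_mono2) auto
      hence "\<bar>\<xi> - s\<bar> powr \<alpha> \<le> g/(2*L)" using upow by simp
      hence "L * \<bar>\<xi> - s\<bar> powr \<alpha> \<le> L * (g/(2*L))" using L by (intro mult_left_mono) auto
      also have "\<dots> = g/2" using L by simp
      finally show "\<bar>f' \<xi> - f' s\<bar> \<le> g/2" using hold[of \<xi> s] by linarith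
    qed
    have key: "f s \<ge> u * g / 2"
    proof (cases "f' s \<ge> 0")
      case True
      hence gs: "g = f' s" by (simp add: g_def)
      obtain \<xi> where \<xi>: "s - u < \<xi>" "\<xi> < s" "f s - f (s-u) = (s - (s-u)) * f' \<xi>"
        using MVT2[of "s-u" s f f'] u0 deriv by auto
      have "\<bar>\<xi> - s\<bar> \<le> u" using \<xi> by auto
      from close[OF this] gs have "f' \<xi> \<ge> g/2" by linarith
      hence "u * f' \<xi> \<ge> u * (g/2)" using u0 by (intro mult_left_mono) auto
      thus ?thesis using \<xi>(3) nonneg[of "s-u"] by simp
    next
      case False
      hence gs: "g = - f' s" by (simp add: g_def)
      obtain \<xi> where \<xi>: "s < \<xi>" "\<xi> < s + u" "f (s+u) - f s = (s + u - s) * f' \<xi>"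
        using MVT2[of s "s+u" f f'] u0 deriv by auto
      have "\<bar>\<xi> - s\<bar> \<le> u" using \<xi> by auto
      from close[OF this] gs have "f' \<xi> \<le> - g/2" by linarith
      hence "u * f' \<xi> \<le> u * (- g/2)" using u0 by (intro mult_left_mono) auto
      thus ?thesis using \<xi>(3) nonneg[of "s+u"] by simp
    qed
    have ueq: "u = g powr (1/\<alpha>) / c"
      unfolding u_def c_def using g1 L by (simp add: powr_divide)
    have "g powr 1 \<le> g powr (1/\<alpha>)" using g1 a by (intro powr_mono) (auto simp: field_simps)
    hence gg: "g \<le> g powr (1/\<alpha>)" using g1 by simp
    have "g / c \<le> u" unfolding ueq using gg c0 by (simp add: divide_right_mono)
    hence "g / c * g \<le> u * g" using g1 by (intro mult_right_mono) auto
    hence "g / c * g / 2 \<le> u * g / 2" by simp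
    hence "g * g \<le> c * (g * u)" using c0 by (simp add: field_simps)
    also have "c * (g * u) \<le> c * (2 * f s)" using key c0 by (intro mult_left_mono) (auto simp: mult.commute)
    finally have "g * g \<le> 2 * c * f s" by simp
    hence "(f' s)\<^sup>2 \<le> 2 * c * f s" by (simp add: g_def power2_eq_square)
    also have "\<dots> \<le> (1 + 2 * c) * (1 + f s)" using c0 fs0 expand by simp
    finally show ?thesis by (simp add: c_def)
  qed
qed

lemma my_hbi_sequence:
  fixes f :: "'a \<Rightarrow> 'b::{real_normed_vector, complete_space, second_countable_topology}"
  assumes f[measurable]: "f \<in> borel_measurable M"
  assumes s: "\<And>i. Bochner_Integration.simple_bochner_integrable M (s i)"
  assumes lim: "(\<lambda>i. \<integral>\<^sup>+x. norm (f x - s i x) \<partial>M) \<longlonglongrightarrow> 0" (is "?S \<longlonglongrightarrow> 0")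
  shows "\<exists>x. has_bochner_integral M f x"
proof -
  let ?s = "\<lambda>n. Bochner_Integration.simple_bochner_integral M (s n)"
  have "Cauchy ?s"
  proof (rule metric_CauchyI)
    fix e :: real assume "0 < e"
    then have "0 < ennreal (e / 2)" by auto
    from order_tendstoD(2)[OF lim this]
    obtain M where M: "\<And>n. M \<le> n \<Longrightarrow> ?S n < e / 2"
      by (auto simp: eventually_sequentially)
    show "\<exists>M. \<forall>m\<ge>M. \<forall>n\<ge>M. dist (?s m) (?s n) < e"
    proof (intro exI allI impI)
      fix m n assume m: "M \<le> m" and n: "M \<le> n"
      have "norm (?s n - ?s m) \<le> ?S n + ?S m"
        by (intro simple_bochner_integral_bounded s f)
      also have "\<dots> < ennreal (e / 2) + e / 2"
        by (intro add_strict_mono M n m)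
      also have "\<dots> = e" using \<open>0<e\<close> by (simp flip: ennreal_plus)
      finally show "dist (?s m) (?s n) < e"
        using \<open>0<e\<close> by (simp add: dist_norm ennreal_less_iff norm_minus_commute)
    qed
  qed
  then obtain x where "?s \<longlonglongrightarrow> x" using Cauchy_convergent_iff convergent_def by blast
  then show ?thesis
    by (intro exI[of _ x] has_bochner_integral.intros[OF f s lim])
qed

lemma my_hbi_bounded:
  fixes f :: "'a \<Rightarrow> 'b::{real_normed_vector, complete_space, second_countable_topology}"
  assumes f[measurable]: "f \<in> borel_measurable M" and fin: "(\<integral>\<^sup>+x. norm (f x) \<partial>M) < \<infinity>"
  shows "\<exists>x. has_bochner_integral M f x"
proof -
  from borel_measurable_implies_sequence_metric[OF f, of 0] obtain s where
    s: "\<And>i. simple_function M (s i)" and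
    pointwise: "\<And>x. x \<in> space M \<Longrightarrow> (\<lambda>i. s i x) \<longlonglongrightarrow> f x" and
    bound: "\<And>i x. x \<in> space M \<Longrightarrow> norm (s i x) \<le> 2 * norm (f x)"
    by simp metis
  show ?thesis
  proof (rule my_hbi_sequence)
    { fix i
      have "(\<integral>\<^sup>+x. norm (s i x) \<partial>M) \<le> (\<integral>\<^sup>+x. ennreal (2 * norm (f x)) \<partial>M)"
        by (intro nn_integral_mono) (simp add: bound)
      also have "\<dots> = 2 * (\<integral>\<^sup>+x. ennreal (norm (f x)) \<partial>M)"
        by (simp add: ennreal_mult nn_integral_cmult)
      also have "\<dots> < top"
        using fin by (simp add: ennreal_mult_less_top)
      finally have "(\<integral>\<^sup>+x. norm (s i x) \<partial>M) < \<infinity>"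
        by simp }
    note fin_s = this
    show "\<And>i. Bochner_Integration.simple_bochner_integrable M (s i)"
      by (rule simple_bochner_integrableI_bounded) fact+
    show "(\<lambda>i. \<integral>\<^sup>+ x. ennreal (norm (f x - s i x)) \<partial>M) \<longlonglongrightarrow> 0"
    proof (rule nn_integral_dominated_convergence_norm)
      show "\<And>j. AE x in M. norm (s j x) \<le> 2 * norm (f x)"
        using bound by auto
      show "\<And>i. s i \<in> borel_measurable M" "(\<lambda>x. 2 * norm (f x)) \<in> borel_measurable M"
        using s by (auto intro: borel_measurable_simple_function)
      show "(\<integral>\<^sup>+ x. ennreal (2 * norm (f x)) \<partial>M) < \<infinity>"
        using fin by (simp add: nn_integral_cmult ennreal_mult ennreal_mult_less_top)
      show "AE x in M. (\<lambda>i. s i x) \<longlonglongrightarrow> f x"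
        using pointwise by auto
    qed fact
  qed fact
qed


lemma powr_le_1plus: "0 \<le> x \<Longrightarrow> 0 < a \<Longrightarrow> a \<le> 1 \<Longrightarrow> x powr a \<le> 1 + (x::real)"
proof (cases "x \<le> 1")
  case True
  assume "0 \<le> x" "0 < a" "a \<le> 1"
  then show ?thesis using True powr_le1[of a x] by auto
next
  case False
  assume "0 \<le> x" "0 < a" "a \<le> 1"
  then have "x powr a \<le> x powr 1" using False by (intro powr_mono) auto
  then show ?thesis using False by simp
qed

locale ogd_setting =
  fixes X :: "'a::euclidean_space set" and Y :: "real set"
    and \<rho> :: "('a \<times> real) measure"
    and \<Phi> :: "'a \<Rightarrow> 'h::{real_inner, complete_space, second_countable_topology}"
    and \<phi> \<phi>' :: "real \<Rightarrow> real \<Rightarrow> real"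
    and fH :: 'h and \<eta> :: "nat \<Rightarrow> real" and \<alpha> L :: real
    and P :: "'w measure" and Z :: "nat \<Rightarrow> 'w \<Rightarrow> 'a \<times> real"
  assumes rho_prob: "prob_space \<rho>"
    and rho_sets: "sets \<rho> = sets (restrict_space borel (X \<times> Y))"
    and K_cont: "continuous_on (X \<times> X) (\<lambda>p. inner (\<Phi> (fst p)) (\<Phi> (snd p)))"
    and kappa: "\<exists>\<kappa>. \<forall>x\<in>X. norm (\<Phi> x) \<le> \<kappa>"
    and phi_meas: "(\<lambda>p. \<phi> (fst p) (snd p)) \<in> borel_measurable (restrict_space borel (Y \<times> UNIV))"
    and phi_nonneg: "\<forall>y\<in>Y. \<forall>s. 0 \<le> \<phi> y s"
    and phi_deriv: "\<forall>y\<in>Y. \<forall>s. (\<phi> y has_real_derivative \<phi>' y s) (at s)"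
    and phi_convex: "\<forall>y\<in>Y. convex_on UNIV (\<phi> y)"
    and alpha: "0 < \<alpha>" "\<alpha> \<le> 1" and L: "0 < L"
    and holder: "\<forall>y\<in>Y. \<forall>s s'. \<bar>\<phi>' y s - \<phi>' y s'\<bar> \<le> L * \<bar>s - s'\<bar> powr \<alpha>"
    and fH_min: "\<forall>f. gen_err \<rho> \<phi> \<Phi> fH \<le> gen_err \<rho> \<phi> \<Phi> f"
    and bounded: "\<exists>B. (\<forall>y\<in>Y. \<phi> y 0 \<le> B) \<and> (\<forall>x\<in>X. \<forall>y\<in>Y. \<phi> y (inner fH (\<Phi> x)) \<le> B)"
    and P_prob: "prob_space P"
    and Z_indep: "prob_space.indep_vars P (\<lambda>_. \<rho>) Z UNIV"
    and Z_distr: "\<forall>t. distr P \<rho> (Z t) = \<rho>"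
    and eta_pos: "\<forall>t. 0 < \<eta> t"
    and eta_lim: "\<eta> \<longlonglongrightarrow> 0"
begin

definition kap where "kap = max 1 (SOME k. \<forall>x\<in>X. norm (\<Phi> x) \<le> k)"

lemma kap: "x \<in> X \<Longrightarrow> norm (\<Phi> x) \<le> kap" "1 \<le> kap"
proof -
  have "\<forall>x\<in>X. norm (\<Phi> x) \<le> (SOME k. \<forall>x\<in>X. norm (\<Phi> x) \<le> k)"
    using someI_ex[OF kappa] .
  then show "x \<in> X \<Longrightarrow> norm (\<Phi> x) \<le> kap" unfolding kap_def by force
  show "1 \<le> kap" unfolding kap_def by simp
qed

definition Bb where
  "Bb = max 0 (SOME B. (\<forall>y\<in>Y. \<phi> y 0 \<le> B) \<and> (\<forall>x\<in>X. \<forall>y\<in>Y. \<phi> y (inner fH (\<Phi> x)) \<le> B))"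

lemma Bb: "y \<in> Y \<Longrightarrow> \<phi> y 0 \<le> Bb" "x \<in> X \<Longrightarrow> y \<in> Y \<Longrightarrow> \<phi> y (inner fH (\<Phi> x)) \<le> Bb" "0 \<le> Bb"
proof -
  note s = someI_ex[OF bounded]
  show "y \<in> Y \<Longrightarrow> \<phi> y 0 \<le> Bb" using s unfolding Bb_def by force
  show "x \<in> X \<Longrightarrow> y \<in> Y \<Longrightarrow> \<phi> y (inner fH (\<Phi> x)) \<le> Bb" using s unfolding Bb_def by force
  show "0 \<le> Bb" unfolding Bb_def by simp
qed

definition Aa where "Aa = 1 + 2 * (2*L) powr (1/\<alpha>)"

lemma Aa: "1 \<le> Aa" unfolding Aa_def by simp

lemma sb: "y \<in> Y \<Longrightarrow> (\<phi>' y s)\<^sup>2 \<le> Aa * (1 + \<phi> y s)"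
  unfolding Aa_def
  by (rule self_bound[of "\<phi> y"]) (use phi_nonneg phi_deriv holder alpha L in auto)

definition g0 where "g0 = sqrt (Aa * (1 + Bb))"

lemma g0: "0 \<le> g0" unfolding g0_def using Aa Bb(3) by simp

lemma phi'_0: "y \<in> Y \<Longrightarrow> \<bar>\<phi>' y 0\<bar> \<le> g0"
proof -
  assume y: "y \<in> Y"
  have "(\<phi>' y 0)\<^sup>2 \<le> Aa * (1 + \<phi> y 0)" using sb[OF y] .
  also have "\<dots> \<le> Aa * (1 + Bb)" using Bb(1)[OF y] Aa by (intro mult_left_mono) auto
  finally have "sqrt ((\<phi>' y 0)\<^sup>2) \<le> g0" unfolding g0_def by (rule real_sqrt_le_mono)
  then show ?thesis by simp
qed

lemma phi'_growth: "y \<in> Y \<Longrightarrow> \<bar>\<phi>' y s\<bar> \<le> g0 + L * (1 + \<bar>s\<bar>)"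
proof -
  assume y: "y \<in> Y"
  have "\<bar>\<phi>' y s - \<phi>' y 0\<bar> \<le> L * \<bar>s - 0\<bar> powr \<alpha>" using holder y by blast
  also have "\<dots> \<le> L * (1 + \<bar>s\<bar>)" using L alpha powr_le_1plus[of "\<bar>s\<bar>" \<alpha>]
    by (intro mult_left_mono) auto
  finally show ?thesis using phi'_0[OF y] by linarith
qed

lemma tangent: "y \<in> Y \<Longrightarrow> \<phi> y b - \<phi> y a \<ge> \<phi>' y a * (b - a)"
  using phi_convex phi_deriv
  by (intro convex_on_imp_above_tangent[where A=UNIV]) auto

lemma phi_upper: "y \<in> Y \<Longrightarrow> \<phi> y s \<le> Bb + \<bar>s\<bar> * (g0 + L * (1 + \<bar>s\<bar>))"
proof -
  assume y: "y \<in> Y"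
  have "\<phi> y 0 - \<phi> y s \<ge> \<phi>' y s * (0 - s)" by (rule tangent[OF y])
  hence "\<phi> y s \<le> \<phi> y 0 + \<phi>' y s * s" by simp
  also have "\<phi>' y s * s \<le> \<bar>s\<bar> * (g0 + L * (1 + \<bar>s\<bar>))"
  proof -
    have "\<phi>' y s * s \<le> \<bar>\<phi>' y s\<bar> * \<bar>s\<bar>" by (metis abs_ge_self abs_mult)
    also have "\<dots> \<le> (g0 + L * (1 + \<bar>s\<bar>)) * \<bar>s\<bar>" using phi'_growth[OF y] by (intro mult_right_mono) auto
    finally show ?thesis by (simp add: mult.commute)
  qed
  finally show ?thesis using Bb(1)[OF y] by linarith
qed

end



context ogd_setting begin

lemma space_rho: "space \<rho> = X \<times> Y"
  using sets_eq_imp_space_eq[OF rho_sets] by (simp add: space_restrict_space)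

lemma meas_rho: "measurable \<rho> N = measurable (restrict_space borel (X \<times> Y)) N"
  by (rule measurable_cong_sets[OF rho_sets refl])

lemma Phi_cont: "continuous_on X \<Phi>"
  unfolding continuous_on_def
proof
  fix x0 assume x0: "x0 \<in> X"
  let ?K = "\<lambda>p. inner (\<Phi> (fst p)) (\<Phi> (snd p))"
  define h where "h x = inner (\<Phi> x - \<Phi> x0) (\<Phi> x - \<Phi> x0)" for x
  have h_eq: "h x = ?K (x,x) - ?K (x,x0) - ?K (x0,x) + ?K (x0,x0)" for x
    unfolding h_def by (simp add: inner_diff_left inner_diff_right)
  have c1: "continuous_on X (\<lambda>x. ?K (x,x))"
    by (rule continuous_on_compose2[OF K_cont continuous_on_Pair[OF continuous_on_id continuous_on_id]]) auto
  have c2: "continuous_on X (\<lambda>x. ?K (x,x0))"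
    by (rule continuous_on_compose2[OF K_cont continuous_on_Pair[OF continuous_on_id continuous_on_const]]) (use x0 in auto)
  have c3: "continuous_on X (\<lambda>x. ?K (x0,x))"
    by (rule continuous_on_compose2[OF K_cont continuous_on_Pair[OF continuous_on_const continuous_on_id]]) (use x0 in auto)
  have "continuous_on X h" unfolding h_eq
    by (intro continuous_intros c1 c2 c3)
  hence "(h \<longlongrightarrow> h x0) (at x0 within X)" using x0 by (simp add: continuous_on_def)
  hence "((\<lambda>x. sqrt (h x)) \<longlongrightarrow> sqrt (h x0)) (at x0 within X)" by (rule tendsto_real_sqrt)
  moreover have "sqrt (h x) = norm (\<Phi> x - \<Phi> x0)" for x
    unfolding h_def by (simp add: norm_eq_sqrt_inner)
  moreover have "h x0 = 0" unfolding h_def by simp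
  ultimately have "((\<lambda>x. norm (\<Phi> x - \<Phi> x0)) \<longlongrightarrow> 0) (at x0 within X)" by simp
  then show "(\<Phi> \<longlongrightarrow> \<Phi> x0) (at x0 within X)"
    by (simp add: tendsto_norm_zero_iff LIM_zero_iff)
qed

lemma meas_phi_comp:
  assumes a: "a \<in> borel_measurable M" and b: "b \<in> borel_measurable M" and aY: "\<And>x. x \<in> space M \<Longrightarrow> a x \<in> Y"
  shows "(\<lambda>x. \<phi> (a x) (b x)) \<in> borel_measurable M"
proof -
  have "(\<lambda>x. (a x, b x)) \<in> measurable M (restrict_space borel (Y \<times> UNIV))"
    using aY by (intro measurable_restrict_space2 borel_measurable_Pair a b) auto
  from measurable_compose[OF this phi_meas] show ?thesis by simp
qed

lemma phi'_meas: "(\<lambda>p. \<phi>' (fst p) (snd p)) \<in> borel_measurable (restrict_space borel (Y \<times> UNIV))"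
proof (rule borel_measurable_LIMSEQ_real)
  let ?M = "restrict_space borel (Y \<times> (UNIV::real set))"
  fix p assume "p \<in> space ?M"
  hence y: "fst p \<in> Y" by (auto simp: space_restrict_space)
  let ?f = "\<phi> (fst p)" and ?x = "snd p"
  have "(?f has_real_derivative \<phi>' (fst p) ?x) (at ?x)" using phi_deriv y by blast
  hence "((\<lambda>y. (?f y - ?f ?x) / (y - ?x)) \<longlongrightarrow> \<phi>' (fst p) ?x) (at ?x)"
    by (simp add: has_field_derivative_iff)
  note LL = LIMSEQ_SEQ_conv[THEN iffD2, OF this]
  have lim: "\<And>S. (\<forall>n. S n \<noteq> ?x) \<and> S \<longlonglongrightarrow> ?x \<Longrightarrow>
      (\<lambda>n. (?f (S n) - ?f ?x) / (S n - ?x)) \<longlonglongrightarrow> \<phi>' (fst p) ?x"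
    using LL by (rule allE) (rule mp)
  have "(\<lambda>n. ?x + inverse (real (Suc n))) \<longlonglongrightarrow> ?x + 0"
    by (rule tendsto_add[OF tendsto_const LIMSEQ_inverse_real_of_nat])
  hence "(\<lambda>n. (?f (?x + 1 / real (Suc n)) - ?f ?x) / (?x + 1 / real (Suc n) - ?x)) \<longlonglongrightarrow> \<phi>' (fst p) ?x"
    by (intro lim) (auto simp: divide_inverse)
  then show "(\<lambda>i. (\<phi> (fst p) (snd p + 1 / real (Suc i)) - \<phi> (fst p) (snd p)) * real (Suc i))
      \<longlonglongrightarrow> \<phi>' (fst p) (snd p)" by simp
next
  fix i :: nat
  let ?M = "restrict_space borel (Y \<times> (UNIV::real set))"
  have mf: "(\<lambda>p::real\<times>real. fst p) \<in> borel_measurable ?M"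
    by (intro measurable_restrict_space1 borel_measurable_continuous_onI continuous_on_fst continuous_on_id)
  have ms: "(\<lambda>p::real\<times>real. snd p + c) \<in> borel_measurable ?M" for c
    by (intro measurable_restrict_space1 borel_measurable_continuous_onI continuous_on_add continuous_on_snd continuous_on_id continuous_on_const)
  have sp: "\<And>p. p \<in> space ?M \<Longrightarrow> fst p \<in> Y" by (auto simp: space_restrict_space)
  have "(\<lambda>p. \<phi> (fst p) (snd p + 1 / real (Suc i))) \<in> borel_measurable ?M"
    by (rule meas_phi_comp[OF mf ms sp])
  moreover have "(\<lambda>p. \<phi> (fst p) (snd p)) \<in> borel_measurable ?M"
    using meas_phi_comp[OF mf ms sp, of 0] by simp
  ultimately show "(\<lambda>p. (\<phi> (fst p) (snd p + 1 / real (Suc i)) - \<phi> (fst p) (snd p)) * real (Suc i))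
      \<in> borel_measurable ?M" by (intro borel_measurable_times borel_measurable_diff borel_measurable_const)
qed

lemma meas_phi'_comp:
  assumes a: "a \<in> borel_measurable M" and b: "b \<in> borel_measurable M" and aY: "\<And>x. x \<in> space M \<Longrightarrow> a x \<in> Y"
  shows "(\<lambda>x. \<phi>' (a x) (b x)) \<in> borel_measurable M"
proof -
  have "(\<lambda>x. (a x, b x)) \<in> measurable M (restrict_space borel (Y \<times> UNIV))"
    using aY by (intro measurable_restrict_space2 borel_measurable_Pair a b) auto
  from measurable_compose[OF this phi'_meas] show ?thesis by simp
qed

lemma cont_Phi_fst: "continuous_on (X \<times> Y) (\<lambda>z. \<Phi> (fst z))"
  by (rule continuous_on_compose2[OF Phi_cont continuous_on_fst[OF continuous_on_id]]) auto

lemma meas_Phi_fst: "(\<lambda>z. \<Phi> (fst z)) \<in> borel_measurable \<rho>"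
  unfolding meas_rho by (rule borel_measurable_continuous_on_restrict[OF cont_Phi_fst])

lemma meas_snd: "(\<lambda>z. snd z) \<in> borel_measurable \<rho>"
  unfolding meas_rho
  by (rule borel_measurable_continuous_on_restrict[OF continuous_on_snd[OF continuous_on_id]])

lemma meas_Phi_comp: "a \<in> measurable M \<rho> \<Longrightarrow> (\<lambda>w. \<Phi> (fst (a w))) \<in> borel_measurable M"
  by (rule measurable_compose[OF _ meas_Phi_fst])

lemma meas_snd_comp: "a \<in> measurable M \<rho> \<Longrightarrow> (\<lambda>w. snd (a w)) \<in> borel_measurable M"
  by (rule measurable_compose[OF _ meas_snd])

lemma meas_space: "a \<in> measurable M \<rho> \<Longrightarrow> w \<in> space M \<Longrightarrow> a w \<in> X \<times> Y"
  using measurable_space[of a M \<rho> w] space_rho by simp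

end


sublocale ogd_setting \<subseteq> PP: prob_space P by (rule P_prob)
sublocale ogd_setting \<subseteq> RR: prob_space \<rho> by (rule rho_prob)

context ogd_setting begin

abbreviation F where "F w t \<equiv> ogd \<phi>' \<Phi> \<eta> w t"

primrec Rb :: "nat \<Rightarrow> real" where
  "Rb 0 = 0"
| "Rb (Suc t) = Rb t + \<eta> t * (g0 + L * (1 + kap * Rb t)) * kap"

lemma Rb_nonneg: "0 \<le> Rb t"
proof (induction t)
  case (Suc t)
  have "0 \<le> \<eta> t * (g0 + L * (1 + kap * Rb t)) * kap"
    using Suc eta_pos g0 L kap(2) by (intro mult_nonneg_nonneg add_nonneg_nonneg) (auto intro: less_imp_le)
  then show ?case using Suc by simp
qed simp

lemma ogd_local: "(\<And>k. k < t \<Longrightarrow> w k = w' k) \<Longrightarrow> F w t = F w' t"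
proof (induction t)
  case (Suc t)
  then have "F w t = F w' t" by simp
  moreover have "w t = w' t" using Suc by simp
  ultimately show ?case by simp
qed simp

lemma ogd_bound: "(\<And>k. k < t \<Longrightarrow> w k \<in> X \<times> Y) \<Longrightarrow> norm (F w t) \<le> Rb t"
proof (induction t)
  case 0 then show ?case by simp
next
  case (Suc t)
  have IH: "norm (F w t) \<le> Rb t" using Suc by simp
  show ?case
  proof (cases "t = 0")
    case True then show ?thesis using Rb_nonneg[of "Suc t"] by simp
  next
    case False
    obtain x y where xy: "w t = (x, y)" by (cases "w t")
    have x: "x \<in> X" and y: "y \<in> Y" using Suc.prems[of t] xy by auto
    let ?f = "F w t"
    let ?s = "inner ?f (\<Phi> x)"
    have s_le: "\<bar>?s\<bar> \<le> kap * Rb t"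
    proof -
      have "\<bar>?s\<bar> \<le> norm ?f * norm (\<Phi> x)" by (rule Cauchy_Schwarz_ineq2)
      also have "\<dots> \<le> Rb t * kap" using IH kap(1)[OF x] by (intro mult_mono) (auto intro: order_trans[OF norm_ge_zero])
      finally show ?thesis by (simp add: mult.commute)
    qed
    have g_le: "\<bar>\<phi>' y ?s\<bar> \<le> g0 + L * (1 + kap * Rb t)"
      using phi'_growth[OF y, of ?s] s_le L by (smt (verit) mult_left_mono)
    have "norm (F w (Suc t)) = norm (?f - (\<eta> t * \<phi>' y ?s) *\<^sub>R \<Phi> x)"
      using False xy by simp
    also have "\<dots> \<le> norm ?f + \<bar>\<eta> t\<bar> * \<bar>\<phi>' y ?s\<bar> * norm (\<Phi> x)"
      using norm_triangle_ineq4[of ?f "(\<eta> t * \<phi>' y ?s) *\<^sub>R \<Phi> x"] by (simp add: abs_mult)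
    also have "\<bar>\<eta> t\<bar> * \<bar>\<phi>' y ?s\<bar> * norm (\<Phi> x) \<le> \<eta> t * (g0 + L * (1 + kap * Rb t)) * kap"
      using eta_pos g_le kap(1)[OF x]
      by (intro mult_mono) (auto simp: less_imp_le)
    finally show ?thesis using IH by simp
  qed
qed

lemma Z_meas: "Z k \<in> measurable P \<rho>"
  using Z_indep unfolding PP.indep_vars_def2 by auto

abbreviation PiR where "PiR n \<equiv> PiM {..<n} (\<lambda>_. \<rho>)"

lemma ogd_meas_Pi: "t \<le> n \<Longrightarrow> (\<lambda>v. F v t) \<in> borel_measurable (PiR n)"
proof (induction t)
  case 0 then show ?case by simp
next
  case (Suc t)
  then have IH: "(\<lambda>v. F v t) \<in> borel_measurable (PiR n)" by simp
  have vt: "(\<lambda>v. v t) \<in> measurable (PiR n) \<rho>" using Suc.prems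
    by (intro measurable_component_singleton) auto
  have "(\<lambda>v. F v t - (\<eta> t * \<phi>' (snd (v t)) (inner (F v t) (\<Phi> (fst (v t))))) *\<^sub>R \<Phi> (fst (v t)))
     \<in> borel_measurable (PiR n)"
  proof (intro borel_measurable_diff borel_measurable_scaleR borel_measurable_times
      borel_measurable_const IH meas_phi'_comp meas_snd_comp[OF vt] meas_Phi_comp[OF vt] borel_measurable_inner)
    fix v assume "v \<in> space (PiR n)"
    then show "snd (v t) \<in> Y" using meas_space[OF vt] by force
  qed
  then show ?case by (simp cong: if_cong)
qed

definition W where "W t \<omega> = restrict (\<lambda>k. Z k \<omega>) {..<t}"

lemma W_meas: "W t \<in> measurable P (PiR t)"
  unfolding W_def by (intro measurable_restrict Z_meas)

lemma ogd_W: "F (\<lambda>k. Z k \<omega>) t = F (W t \<omega>) t"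
  by (rule ogd_local) (simp add: W_def)

lemma ogd_meas: "(\<lambda>\<omega>. F (\<lambda>k. Z k \<omega>) t) \<in> borel_measurable P"
  unfolding ogd_W by (rule measurable_compose[OF W_meas ogd_meas_Pi]) simp

lemma Z_space: "\<omega> \<in> space P \<Longrightarrow> Z k \<omega> \<in> X \<times> Y"
  by (rule meas_space[OF Z_meas])

lemma ogd_bound_P: "\<omega> \<in> space P \<Longrightarrow> norm (F (\<lambda>k. Z k \<omega>) t) \<le> Rb t"
  by (rule ogd_bound) (rule Z_space)

end


context ogd_setting begin

definition psi where "psi z f = \<phi> (snd z) (inner f (\<Phi> (fst z)))"

definition Mb where "Mb r = Bb + kap * r * (g0 + L * (1 + kap * r))"

lemma inner_Phi_le: "x \<in> X \<Longrightarrow> \<bar>inner f (\<Phi> x)\<bar> \<le> kap * norm f"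
proof -
  assume x: "x \<in> X"
  have "\<bar>inner f (\<Phi> x)\<bar> \<le> norm f * norm (\<Phi> x)" by (rule Cauchy_Schwarz_ineq2)
  also have "\<dots> \<le> norm f * kap" using kap(1)[OF x] by (intro mult_left_mono) auto
  finally show ?thesis by (simp add: mult.commute)
qed

lemma psi_bounds: "z \<in> X \<times> Y \<Longrightarrow> norm f \<le> r \<Longrightarrow> 0 \<le> psi z f \<and> psi z f \<le> Mb r"
proof -
  assume z: "z \<in> X \<times> Y" and r: "norm f \<le> r"
  then have x: "fst z \<in> X" and y: "snd z \<in> Y" by auto
  let ?s = "inner f (\<Phi> (fst z))"
  have s: "\<bar>?s\<bar> \<le> kap * r"
    using inner_Phi_le[OF x, of f] r kap(2) by (smt (verit) mult_left_mono)
  have "psi z f \<le> Bb + \<bar>?s\<bar> * (g0 + L * (1 + \<bar>?s\<bar>))"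
    unfolding psi_def by (rule phi_upper[OF y])
  also have "\<dots> \<le> Bb + kap * r * (g0 + L * (1 + kap * r))"
    using s g0 L by (intro add_left_mono mult_mono add_left_mono mult_left_mono) auto
  finally show ?thesis unfolding Mb_def psi_def using phi_nonneg y by auto
qed

lemma psi_meas:
  assumes a: "a \<in> measurable M \<rho>" and b: "b \<in> borel_measurable M"
  shows "(\<lambda>w. psi (a w) (b w)) \<in> borel_measurable M"
  unfolding psi_def
proof (rule meas_phi_comp[OF meas_snd_comp[OF a]])
  show "(\<lambda>x. b x \<bullet> \<Phi> (fst (a x))) \<in> borel_measurable M"
    by (intro borel_measurable_inner b meas_Phi_comp[OF a])
  fix x assume "x \<in> space M" then show "snd (a x) \<in> Y" using meas_space[OF a] by force
qed

lemma psi_b: "x \<in> space \<rho> \<Longrightarrow> 0 \<le> psi x f \<and> psi x f \<le> Mb (norm f)"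
  using psi_bounds[of x f "norm f"] space_rho by auto

lemma psi_integrable: "integrable \<rho> (\<lambda>z. psi z f)"
proof (rule RR.integrable_const_bound[where B="Mb (norm f)"])
  show "AE x in \<rho>. norm (psi x f) \<le> Mb (norm f)"
    using psi_b by (intro AE_I2) auto
  show "(\<lambda>z. psi z f) \<in> borel_measurable \<rho>"
    using psi_meas[OF measurable_ident_sets[OF refl], of "\<lambda>_. f"] by simp
qed

lemma gen_err_psi: "gen_err \<rho> \<phi> \<Phi> f = (\<integral>z. psi z f \<partial>\<rho>)"
  unfolding gen_err_def psi_def by simp

lemma nn_psi: "(\<integral>\<^sup>+z. ennreal (psi z f) \<partial>\<rho>) = ennreal (gen_err \<rho> \<phi> \<Phi> f)"
  unfolding gen_err_psi
  by (rule nn_integral_eq_integral[OF psi_integrable])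
     (use psi_b in \<open>auto intro!: AE_I2\<close>)

lemma gen_err_nonneg: "0 \<le> gen_err \<rho> \<phi> \<Phi> f"
  unfolding gen_err_psi using psi_b
  by (intro integral_nonneg_AE AE_I2) auto

lemma expect_psi_fixed:
  "(\<integral>\<^sup>+\<omega>. ennreal (psi (Z t \<omega>) f) \<partial>P) = ennreal (gen_err \<rho> \<phi> \<Phi> f)"
proof -
  have "(\<integral>\<^sup>+\<omega>. ennreal (psi (Z t \<omega>) f) \<partial>P) = (\<integral>\<^sup>+z. ennreal (psi z f) \<partial>distr P \<rho> (Z t))"
    by (rule nn_integral_distr[symmetric, OF Z_meas])
       (simp add: Z_distr, intro measurable_compose[OF _ measurable_ennreal] psi_meas measurable_ident_sets, auto)
  also have "\<dots> = ennreal (gen_err \<rho> \<phi> \<Phi> f)" by (simp add: Z_distr nn_psi)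
  finally show ?thesis .
qed

abbreviation X1 where "X1 t \<equiv> (\<lambda>\<omega>. restrict (\<lambda>i. Z i \<omega>) {t})"
abbreviation M1 where "M1 t \<equiv> PiM {t} (\<lambda>_. \<rho>)"

lemma X1_meas: "X1 t \<in> measurable P (M1 t)"
  by (intro measurable_restrict Z_meas)

lemma indep_t: "prob_space.indep_var P (M1 t) (X1 t) (PiR t) (W t)"
  unfolding W_def[abs_def]
  by (rule PP.indep_var_restrict[OF Z_indep]) auto

lemma expect_psi_ge:
  "ennreal (gen_err \<rho> \<phi> \<Phi> fH) \<le> (\<integral>\<^sup>+\<omega>. ennreal (psi (Z t \<omega>) (F (\<lambda>k. Z k \<omega>) t)) \<partial>P)"
proof -
  let ?Q = "distr P (PiR t) (W t)"
  let ?Q1 = "distr P (M1 t) (X1 t)"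
  interpret Q: prob_space ?Q by (rule PP.prob_space_distr[OF W_meas])
  interpret Q1: prob_space ?Q1 by (rule PP.prob_space_distr[OF X1_meas])
  interpret RQ: pair_prob_space ?Q1 ?Q ..
  have eq: "?Q1 \<Otimes>\<^sub>M ?Q = distr P (M1 t \<Otimes>\<^sub>M PiR t) (\<lambda>\<omega>. (X1 t \<omega>, W t \<omega>))"
    using indep_t unfolding PP.indep_var_distribution_eq by simp
  define h where "h p = ennreal (psi (fst p t) (F (snd p) t))" for p :: "(nat \<Rightarrow> 'a \<times> real) \<times> (nat \<Rightarrow> 'a \<times> real)"
  have fm: "(\<lambda>p::(nat \<Rightarrow> 'a \<times> real) \<times> (nat \<Rightarrow> 'a \<times> real). fst p t) \<in> measurable (M1 t \<Otimes>\<^sub>M PiR t) \<rho>"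
    by (rule measurable_compose[OF measurable_fst measurable_component_singleton]) simp
  have hm: "h \<in> borel_measurable (M1 t \<Otimes>\<^sub>M PiR t)"
    unfolding h_def
    by (intro measurable_compose[OF _ measurable_ennreal] psi_meas[OF fm]
        measurable_compose[OF measurable_snd ogd_meas_Pi]) simp
  have hm': "h \<in> borel_measurable (?Q1 \<Otimes>\<^sub>M ?Q)"
    using hm by (simp cong: measurable_cong_sets)
  have "(\<integral>\<^sup>+\<omega>. ennreal (psi (Z t \<omega>) (F (\<lambda>k. Z k \<omega>) t)) \<partial>P) = (\<integral>\<^sup>+\<omega>. h (X1 t \<omega>, W t \<omega>) \<partial>P)"
    unfolding h_def ogd_W by simp
  also have "\<dots> = (\<integral>\<^sup>+p. h p \<partial>distr P (M1 t \<Otimes>\<^sub>M PiR t) (\<lambda>\<omega>. (X1 t \<omega>, W t \<omega>)))"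
    by (rule nn_integral_distr[symmetric]) (auto intro!: measurable_Pair X1_meas W_meas hm)
  also have "\<dots> = (\<integral>\<^sup>+p. h p \<partial>(?Q1 \<Otimes>\<^sub>M ?Q))" by (simp add: eq)
  also have "\<dots> = (\<integral>\<^sup>+v. (\<integral>\<^sup>+u. h (u, v) \<partial>?Q1) \<partial>?Q)"
    by (rule RQ.nn_integral_snd[symmetric, OF hm'])
  also have "\<dots> \<ge> (\<integral>\<^sup>+v. ennreal (gen_err \<rho> \<phi> \<Phi> fH) \<partial>?Q)"
  proof (rule nn_integral_mono)
    fix v
    have "(\<integral>\<^sup>+u. h (u, v) \<partial>?Q1) = (\<integral>\<^sup>+\<omega>. h (X1 t \<omega>, v) \<partial>P)"
    proof (rule nn_integral_distr[OF X1_meas])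
      have "(\<lambda>u. h (u, v)) \<in> borel_measurable (M1 t)"
      proof -
        have "(\<lambda>u. psi (u t) (F v t)) \<in> borel_measurable (M1 t)"
          using psi_meas[of "\<lambda>u. u t" "M1 t" "\<lambda>_. F v t"] measurable_component_singleton[of t "{t}" "\<lambda>_. \<rho>"] by simp
        then show ?thesis unfolding h_def by (intro measurable_compose[OF _ measurable_ennreal]) simp
      qed
      then show "(\<lambda>u. h (u, v)) \<in> borel_measurable ?Q1" by simp
    qed
    also have "\<dots> = ennreal (gen_err \<rho> \<phi> \<Phi> (F v t))"
      unfolding h_def by (simp add: expect_psi_fixed)
    finally show "ennreal (gen_err \<rho> \<phi> \<Phi> fH) \<le> (\<integral>\<^sup>+u. h (u, v) \<partial>?Q1)"
      using fH_min by (simp add: ennreal_leI)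
  qed
  also have "(\<integral>\<^sup>+v. ennreal (gen_err \<rho> \<phi> \<Phi> fH) \<partial>?Q) = ennreal (gen_err \<rho> \<phi> \<Phi> fH)"
    using Q.emeasure_space_1 by simp
  finally show ?thesis .
qed

end


context ogd_setting begin

lemma sq_expand: "(norm (e - c *\<^sub>R v))\<^sup>2 = (norm e)\<^sup>2 - 2 * c * inner e v + c\<^sup>2 * (norm v)\<^sup>2"
proof -
  have "(norm (e - c *\<^sub>R v))\<^sup>2 = inner (e - c *\<^sub>R v) (e - c *\<^sub>R v)" by (simp only: power2_norm_eq_inner)
  also have "\<dots> = inner e e - 2 * c * inner e v + c\<^sup>2 * inner v v"
    by (simp add: inner_diff_left inner_diff_right inner_commute[of v e] power2_eq_square algebra_simps)
  also have "\<dots> = (norm e)\<^sup>2 - 2 * c * inner e v + c\<^sup>2 * (norm v)\<^sup>2" by (simp only: power2_norm_eq_inner)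
  finally show ?thesis .
qed

lemma step_ineq:
  assumes x: "x \<in> X" and y: "y \<in> Y" and et: "0 \<le> et"
  shows "(norm (f - (et * \<phi>' y (inner f (\<Phi> x))) *\<^sub>R \<Phi> x - fH))\<^sup>2
    \<le> (norm (f - fH))\<^sup>2 - (2*et - et\<^sup>2*kap\<^sup>2*Aa) * (\<phi> y (inner f (\<Phi> x)) - \<phi> y (inner fH (\<Phi> x)))
       + et\<^sup>2*kap\<^sup>2*Aa*(1+Bb)"
proof -
  define e where "e = f - fH"
  define s where "s = inner f (\<Phi> x)"
  define sH where "sH = inner fH (\<Phi> x)"
  define g where "g = \<phi>' y s"
  define v where "v = \<Phi> x"
  have ev: "inner e v = s - sH" unfolding e_def s_def sH_def v_def by (simp add: inner_diff_left)
  have eq1: "f - (et * g) *\<^sub>R v - fH = e - (et * g) *\<^sub>R v" unfolding e_def by (simp add: algebra_simps)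
  have "(norm (f - (et * g) *\<^sub>R v - fH))\<^sup>2 = (norm (e - (et * g) *\<^sub>R v))\<^sup>2" by (simp only: eq1)
  also have "\<dots> = (norm e)\<^sup>2 - 2 * (et * g) * inner e v + (et*g)\<^sup>2 * (norm v)\<^sup>2"
    by (rule sq_expand)
  also have "\<dots> = (norm e)\<^sup>2 - 2 * et * (g * (s - sH)) + et\<^sup>2 * (g\<^sup>2 * (norm v)\<^sup>2)"
    by (simp add: ev algebra_simps power2_eq_square)
  also have "\<dots> \<le> (norm e)\<^sup>2 - 2 * et * (\<phi> y s - \<phi> y sH) + et\<^sup>2 * (Aa * (1 + \<phi> y s) * kap\<^sup>2)"
  proof -
    have t: "\<phi> y sH - \<phi> y s \<ge> g * (sH - s)" unfolding g_def by (rule tangent[OF y])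
    have a: "2 * et * (\<phi> y s - \<phi> y sH) \<le> 2 * et * (g * (s - sH))"
      using t et by (intro mult_left_mono) (auto simp: algebra_simps)
    have b1: "g\<^sup>2 \<le> Aa * (1 + \<phi> y s)" unfolding g_def by (rule sb[OF y])
    have b2: "(norm v)\<^sup>2 \<le> kap\<^sup>2" unfolding v_def using kap(1)[OF x] by (intro power_mono) auto
    have "g\<^sup>2 * (norm v)\<^sup>2 \<le> Aa * (1 + \<phi> y s) * kap\<^sup>2"
      using b1 b2 by (intro mult_mono) (auto intro: order_trans[OF zero_le_power2 b1])
    hence "et\<^sup>2 * (g\<^sup>2 * (norm v)\<^sup>2) \<le> et\<^sup>2 * (Aa * (1 + \<phi> y s) * kap\<^sup>2)"
      by (intro mult_left_mono) auto
    with a show ?thesis by linarith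
  qed
  also have "\<dots> = (norm e)\<^sup>2 - (2*et - et\<^sup>2*kap\<^sup>2*Aa) * (\<phi> y s - \<phi> y sH) + et\<^sup>2*kap\<^sup>2*Aa*(1 + \<phi> y sH)"
    by (simp add: algebra_simps)
  also have "\<dots> \<le> (norm e)\<^sup>2 - (2*et - et\<^sup>2*kap\<^sup>2*Aa) * (\<phi> y s - \<phi> y sH) + et\<^sup>2*kap\<^sup>2*Aa*(1 + Bb)"
    using Bb(2)[OF x y] Aa unfolding sH_def by (intro add_left_mono mult_left_mono) auto
  finally show ?thesis unfolding e_def s_def sH_def g_def v_def .
qed

end


context ogd_setting begin

abbreviation ft where "ft \<omega> t \<equiv> F (\<lambda>k. Z k \<omega>) t"

definition Dn where "Dn t = (\<integral>\<omega>. (norm (ft \<omega> t - fH))\<^sup>2 \<partial>P)"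

definition gam where "gam = kap\<^sup>2 * Aa * (1 + Bb)"

lemma gam_pos: "1 \<le> gam"
proof -
  have "1 \<le> kap\<^sup>2" using kap(2) by (simp add: one_le_power)
  moreover have "1 \<le> Aa * (1 + Bb)" using Aa Bb(3) by (smt (verit) mult_left_mono mult_cancel_left1)
  ultimately have "1 * 1 \<le> kap\<^sup>2 * (Aa * (1 + Bb))" by (intro mult_mono) auto
  then show ?thesis unfolding gam_def by (simp add: mult.assoc)
qed

lemma int_bdd: "(g :: 'w \<Rightarrow> real) \<in> borel_measurable P \<Longrightarrow> (\<And>\<omega>. \<omega> \<in> space P \<Longrightarrow> \<bar>g \<omega>\<bar> \<le> K) \<Longrightarrow> integrable P g"
  by (rule PP.integrable_const_bound[where B=K]) (auto intro!: AE_I2)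

lemma n_meas: "(\<lambda>\<omega>. (norm (ft \<omega> t - fH))\<^sup>2) \<in> borel_measurable P"
  by (intro borel_measurable_power measurable_compose[OF _ borel_measurable_norm]
      borel_measurable_diff ogd_meas borel_measurable_const)

lemma n_bound: "\<omega> \<in> space P \<Longrightarrow> \<bar>(norm (ft \<omega> t - fH))\<^sup>2\<bar> \<le> (Rb t + norm fH)\<^sup>2"
proof -
  assume w: "\<omega> \<in> space P"
  have "norm (ft \<omega> t - fH) \<le> Rb t + norm fH"
    using ogd_bound_P[OF w, of t] norm_triangle_ineq4[of "ft \<omega> t" fH] by linarith
  then show ?thesis by (simp add: power_mono)
qed

lemma n_int: "integrable P (\<lambda>\<omega>. (norm (ft \<omega> t - fH))\<^sup>2)"
  by (rule int_bdd[OF n_meas n_bound])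

lemma Dn_bound: "Dn t \<le> (Rb t + norm fH)\<^sup>2"
proof -
  have "Dn t \<le> (\<integral>\<omega>. (Rb t + norm fH)\<^sup>2 \<partial>P)"
    unfolding Dn_def using n_bound
    by (intro integral_mono n_int) auto
  then show ?thesis by (simp add: PP.prob_space)
qed

lemma Dn_nn: "(\<integral>\<^sup>+\<omega>. ennreal ((norm (ft \<omega> t - fH))\<^sup>2) \<partial>P) = ennreal (Dn t)"
  unfolding Dn_def by (rule nn_integral_eq_integral[OF n_int]) auto

lemma psit_meas: "(\<lambda>\<omega>. psi (Z t \<omega>) (ft \<omega> t)) \<in> borel_measurable P"
  by (rule psi_meas[OF Z_meas ogd_meas])

lemma psit_bound: "\<omega> \<in> space P \<Longrightarrow> 0 \<le> psi (Z t \<omega>) (ft \<omega> t) \<and> psi (Z t \<omega>) (ft \<omega> t) \<le> Mb (Rb t)"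
  by (rule psi_bounds[OF Z_space ogd_bound_P])

lemma psit_int: "integrable P (\<lambda>\<omega>. psi (Z t \<omega>) (ft \<omega> t))"
  by (rule int_bdd[OF psit_meas]) (use psit_bound in force)

lemma psiH_meas: "(\<lambda>\<omega>. psi (Z t \<omega>) fH) \<in> borel_measurable P"
  by (rule psi_meas[OF Z_meas borel_measurable_const])

lemma psiH_bound: "\<omega> \<in> space P \<Longrightarrow> 0 \<le> psi (Z t \<omega>) fH \<and> psi (Z t \<omega>) fH \<le> Mb (norm fH)"
  by (rule psi_bounds[OF Z_space order_refl])

lemma psiH_int: "integrable P (\<lambda>\<omega>. psi (Z t \<omega>) fH)"
  by (rule int_bdd[OF psiH_meas]) (use psiH_bound in force)

lemma exp_psit: "gen_err \<rho> \<phi> \<Phi> fH \<le> (\<integral>\<omega>. psi (Z t \<omega>) (ft \<omega> t) \<partial>P)"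
proof -
  have "ennreal (gen_err \<rho> \<phi> \<Phi> fH) \<le> ennreal (\<integral>\<omega>. psi (Z t \<omega>) (ft \<omega> t) \<partial>P)"
    using expect_psi_ge[of t] nn_integral_eq_integral[OF psit_int] psit_bound
    by (metis (no_types, lifting) AE_I2)
  moreover have "0 \<le> (\<integral>\<omega>. psi (Z t \<omega>) (ft \<omega> t) \<partial>P)"
    using psit_bound by (intro integral_nonneg_AE AE_I2) auto
  ultimately show ?thesis by (simp add: ennreal_le_iff)
qed

lemma exp_psiH: "(\<integral>\<omega>. psi (Z t \<omega>) fH \<partial>P) = gen_err \<rho> \<phi> \<Phi> fH"
proof -
  have "ennreal (\<integral>\<omega>. psi (Z t \<omega>) fH \<partial>P) = ennreal (gen_err \<rho> \<phi> \<Phi> fH)"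
    using expect_psi_fixed[of t fH] nn_integral_eq_integral[OF psiH_int] psiH_bound
    by (metis (no_types, lifting) AE_I2)
  moreover have "0 \<le> (\<integral>\<omega>. psi (Z t \<omega>) fH \<partial>P)"
    using psiH_bound by (intro integral_nonneg_AE AE_I2) auto
  ultimately show ?thesis using gen_err_nonneg by simp
qed

lemma Dn_step:
  assumes t: "1 \<le> t" and c: "0 \<le> 2 * \<eta> t - (\<eta> t)\<^sup>2 * kap\<^sup>2 * Aa"
  shows "Dn (Suc t) \<le> Dn t + (\<eta> t)\<^sup>2 * gam"
proof -
  let ?c = "2 * \<eta> t - (\<eta> t)\<^sup>2 * kap\<^sup>2 * Aa"
  let ?K = "(\<eta> t)\<^sup>2 * kap\<^sup>2 * Aa * (1 + Bb)"
  let ?rhs = "\<lambda>\<omega>. (norm (ft \<omega> t - fH))\<^sup>2 - ?c * (psi (Z t \<omega>) (ft \<omega> t) - psi (Z t \<omega>) fH) + ?K"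
  have pw: "(norm (ft \<omega> (Suc t) - fH))\<^sup>2 \<le> ?rhs \<omega>" if w: "\<omega> \<in> space P" for \<omega>
  proof -
    obtain x y where xy: "Z t \<omega> = (x, y)" by (cases "Z t \<omega>")
    have x: "x \<in> X" and y: "y \<in> Y" using Z_space[OF w, of t] xy by auto
    have "ft \<omega> (Suc t) = ft \<omega> t - (\<eta> t * \<phi>' y (inner (ft \<omega> t) (\<Phi> x))) *\<^sub>R \<Phi> x"
      using t xy by simp
    then show ?thesis
      using step_ineq[OF x y less_imp_le[OF eta_pos[rule_format]], of "ft \<omega> t"] xy
      by (simp add: psi_def)
  qed
  have ri: "integrable P ?rhs"
    by (intro Bochner_Integration.integrable_add Bochner_Integration.integrable_diff
        integrable_mult_right n_int psit_int psiH_int PP.integrable_const)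
  have "Dn (Suc t) \<le> (\<integral>\<omega>. ?rhs \<omega> \<partial>P)"
    unfolding Dn_def using pw by (intro integral_mono n_int ri) auto
  also have "(\<integral>\<omega>. ?rhs \<omega> \<partial>P) = Dn t - ?c * ((\<integral>\<omega>. psi (Z t \<omega>) (ft \<omega> t) \<partial>P) - (\<integral>\<omega>. psi (Z t \<omega>) fH \<partial>P)) + ?K"
    unfolding Dn_def
    by (simp add: Bochner_Integration.integral_add Bochner_Integration.integral_diff n_int psit_int psiH_int
        Bochner_Integration.integrable_diff integrable_mult_right PP.prob_space)
  also have "\<dots> \<le> Dn t + ?K"
    using exp_psit[of t] exp_psiH[of t] c by (simp add: mult_nonneg_nonneg)
  also have "?K = (\<eta> t)\<^sup>2 * gam" unfolding gam_def by (simp add: mult.assoc)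
  finally show ?thesis .
qed

end


context ogd_setting begin

definition Gz where "Gz f z = \<phi>' (snd z) (inner f (\<Phi> (fst z))) *\<^sub>R \<Phi> (fst z)"

lemma grad_Gz: "grad_err \<rho> \<phi>' \<Phi> f = (\<integral>z. Gz f z \<partial>\<rho>)"
  unfolding grad_err_def Gz_def by simp

lemma Gz_meas_gen:
  assumes a: "a \<in> measurable M \<rho>" and b: "b \<in> borel_measurable M"
  shows "(\<lambda>w. Gz (b w) (a w)) \<in> borel_measurable M"
  unfolding Gz_def
proof (intro borel_measurable_scaleR meas_Phi_comp[OF a] meas_phi'_comp[OF meas_snd_comp[OF a]]
    borel_measurable_inner b)
  fix x assume "x \<in> space M" then show "snd (a x) \<in> Y" using meas_space[OF a] by force
qed

definition Kg where "Kg f = (g0 + L * (1 + kap * norm f)) * kap"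

lemma Gz_bound:
  assumes zs: "z \<in> space \<rho>" shows "norm (Gz f z) \<le> Kg f"
proof -
  have "z \<in> X \<times> Y" using zs space_rho by simp
  then have x: "fst z \<in> X" and y: "snd z \<in> Y" by (auto simp: mem_Times_iff)
  have "\<bar>\<phi>' (snd z) (inner f (\<Phi> (fst z)))\<bar> \<le> g0 + L * (1 + kap * norm f)"
    using phi'_growth[OF y, of "inner f (\<Phi> (fst z))"] inner_Phi_le[OF x, of f] L
    by (smt (verit) mult_left_mono)
  moreover have "0 \<le> g0 + L * (1 + kap * norm f)" using g0 L kap(2) by simp
  ultimately have "\<bar>\<phi>' (snd z) (inner f (\<Phi> (fst z)))\<bar> * norm (\<Phi> (fst z)) \<le> (g0 + L * (1 + kap * norm f)) * kap"
    using kap(1)[OF x] by (intro mult_mono) auto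
  then show "norm (Gz f z) \<le> Kg f"
    unfolding Gz_def Kg_def by simp
qed

lemma Gz_hbi: "has_bochner_integral \<rho> (Gz f) (grad_err \<rho> \<phi>' \<Phi> f)"
proof -
  have "(\<lambda>z. z) \<in> measurable \<rho> \<rho>" by simp
  from Gz_meas_gen[OF this borel_measurable_const, of f]
  have m: "Gz f \<in> borel_measurable \<rho>" by simp
  have "(\<integral>\<^sup>+z. ennreal (norm (Gz f z)) \<partial>\<rho>) \<le> (\<integral>\<^sup>+z. ennreal (Kg f) \<partial>\<rho>)"
    using Gz_bound by (intro nn_integral_mono) (simp add: ennreal_leI)
  also have "\<dots> = ennreal (Kg f)" using RR.emeasure_space_1 by simp
  also have "\<dots> < \<infinity>" by simp
  finally obtain x where hx: "has_bochner_integral \<rho> (Gz f) x"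
    using my_hbi_bounded[OF m] by blast
  moreover have "grad_err \<rho> \<phi>' \<Phi> f = x"
    unfolding grad_Gz using has_bochner_integral_integral_eq[OF hx] by (simp add: eta_contract_eq)
  ultimately show ?thesis by simp
qed

lemma grad_ineq: "gen_err \<rho> \<phi> \<Phi> f - gen_err \<rho> \<phi> \<Phi> fH \<le> norm (grad_err \<rho> \<phi>' \<Phi> f) * norm (f - fH)"
proof -
  have hi: "has_bochner_integral \<rho> (\<lambda>z. inner (Gz f z) (f - fH)) (inner (grad_err \<rho> \<phi>' \<Phi> f) (f - fH))"
    using Gz_hbi by (rule has_bochner_integral_inner_left)
  have "gen_err \<rho> \<phi> \<Phi> f - gen_err \<rho> \<phi> \<Phi> fH = (\<integral>z. psi z f - psi z fH \<partial>\<rho>)"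
    unfolding gen_err_psi by (simp add: Bochner_Integration.integral_diff psi_integrable)
  also have "\<dots> \<le> (\<integral>z. inner (Gz f z) (f - fH) \<partial>\<rho>)"
  proof (rule integral_mono)
    show "integrable \<rho> (\<lambda>z. psi z f - psi z fH)"
      by (rule Bochner_Integration.integrable_diff[OF psi_integrable psi_integrable])
    show "integrable \<rho> (\<lambda>z. inner (Gz f z) (f - fH))"
      by (rule integrable.intros[OF hi])
  next
    fix z assume zs: "z \<in> space \<rho>"
    have "z \<in> X \<times> Y" using zs space_rho by simp
    then have y: "snd z \<in> Y" by (auto simp: mem_Times_iff)
    have "\<phi> (snd z) (inner fH (\<Phi> (fst z))) - \<phi> (snd z) (inner f (\<Phi> (fst z)))
      \<ge> \<phi>' (snd z) (inner f (\<Phi> (fst z))) * (inner fH (\<Phi> (fst z)) - inner f (\<Phi> (fst z)))"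
      by (rule tangent[OF y])
    moreover have "inner (Gz f z) (f - fH) = \<phi>' (snd z) (inner f (\<Phi> (fst z))) * (inner f (\<Phi> (fst z)) - inner fH (\<Phi> (fst z)))"
      unfolding Gz_def by (simp add: inner_diff_right inner_commute[of "\<Phi> (fst z)"] right_diff_distrib)
    ultimately show "psi z f - psi z fH \<le> inner (Gz f z) (f - fH)"
      unfolding psi_def by (simp add: algebra_simps)
  qed
  also have "\<dots> = inner (grad_err \<rho> \<phi>' \<Phi> f) (f - fH)"
    by (rule has_bochner_integral_integral_eq[OF hi])
  also have "\<dots> \<le> norm (grad_err \<rho> \<phi>' \<Phi> f) * norm (f - fH)"
    by (rule order_trans[OF abs_ge_self Cauchy_Schwarz_ineq2])
  finally show ?thesis .
qed

lemma generr_meas: "(\<lambda>\<omega>. gen_err \<rho> \<phi> \<Phi> (ft \<omega> t)) \<in> borel_measurable P"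
proof -
  have m2: "(\<lambda>(v, z). psi z (F v t)) \<in> borel_measurable (PiR t \<Otimes>\<^sub>M \<rho>)"
    using psi_meas[OF measurable_snd measurable_compose[OF measurable_fst ogd_meas_Pi[OF order_refl]]]
    by (simp add: case_prod_beta')
  have "(\<lambda>v. \<integral>z. psi z (F v t) \<partial>\<rho>) \<in> borel_measurable (PiR t)"
    using m2 by (rule RR.borel_measurable_lebesgue_integral)
  from measurable_compose[OF W_meas this]
  show ?thesis unfolding ogd_W gen_err_psi .
qed

end


context ogd_setting begin

lemma Dn_final: "\<exists>C0\<ge>0. \<forall>t\<ge>1. Dn t \<le> C0 + gam * (\<Sum>k=1..t. (\<eta> k)\<^sup>2)"
proof -
  have kA: "0 < kap\<^sup>2 * Aa" using kap(2) Aa by simp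
  have "eventually (\<lambda>t. \<eta> t < 2 / (kap\<^sup>2 * Aa)) sequentially"
    using order_tendstoD(2)[OF eta_lim] kA by simp
  then obtain N0 where N0: "\<And>t. t \<ge> N0 \<Longrightarrow> \<eta> t < 2 / (kap\<^sup>2 * Aa)"
    by (auto simp: eventually_sequentially)
  define N where "N = Suc N0"
  have N1: "1 \<le> N" unfolding N_def by simp
  have cpos: "0 \<le> 2 * \<eta> t - (\<eta> t)\<^sup>2 * kap\<^sup>2 * Aa" if "t \<ge> N" for t
  proof -
    have "\<eta> t * (kap\<^sup>2 * Aa) < 2" using N0[of t] that kA unfolding N_def
      by (simp add: pos_less_divide_eq)
    hence "0 \<le> \<eta> t * (2 - \<eta> t * (kap\<^sup>2 * Aa))" using eta_pos by (simp add: less_imp_le)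
    then show ?thesis by (simp add: algebra_simps power2_eq_square)
  qed
  define C0 where "C0 = (\<Sum>k\<le>N. (Rb k + norm fH)\<^sup>2)"
  have C0: "t \<le> N \<Longrightarrow> Dn t \<le> C0" for t
  proof -
    assume "t \<le> N"
    have "Dn t \<le> (Rb t + norm fH)\<^sup>2" by (rule Dn_bound)
    also have "\<dots> \<le> C0" unfolding C0_def using \<open>t \<le> N\<close>
      by (intro member_le_sum) auto
    finally show ?thesis .
  qed
  have C0nn: "0 \<le> C0" unfolding C0_def by (intro sum_nonneg) auto
  have tail: "Dn t \<le> C0 + gam * (\<Sum>k\<in>{N..<t}. (\<eta> k)\<^sup>2)" if "N \<le> t" for t
    using that
  proof (induction t rule: dec_induct)
    case base then show ?case using C0[of N] by simp
  next
    case (step n)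
    have "Dn (Suc n) \<le> Dn n + (\<eta> n)\<^sup>2 * gam"
      using step N1 cpos by (intro Dn_step) auto
    also have "\<dots> \<le> C0 + gam * (\<Sum>k\<in>{N..<n}. (\<eta> k)\<^sup>2) + (\<eta> n)\<^sup>2 * gam"
      using step by simp
    also have "\<dots> = C0 + gam * (\<Sum>k\<in>{N..<Suc n}. (\<eta> k)\<^sup>2)"
      using step by (simp add: sum.atLeastLessThan_Suc algebra_simps)
    finally show ?case .
  qed
  have "\<forall>t\<ge>1. Dn t \<le> C0 + gam * (\<Sum>k=1..t. (\<eta> k)\<^sup>2)"
  proof (intro allI impI)
    fix t :: nat assume t1: "1 \<le> t"
    have snn: "0 \<le> gam * (\<Sum>k=1..t. (\<eta> k)\<^sup>2)" using gam_pos by (intro mult_nonneg_nonneg sum_nonneg) auto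
    show "Dn t \<le> C0 + gam * (\<Sum>k=1..t. (\<eta> k)\<^sup>2)"
    proof (cases "t \<le> N")
      case True then show ?thesis using C0[of t] snn by simp
    next
      case False
      have "(\<Sum>k\<in>{N..<t}. (\<eta> k)\<^sup>2) \<le> (\<Sum>k=1..t. (\<eta> k)\<^sup>2)"
        using N1 by (intro sum_mono2) auto
      hence "gam * (\<Sum>k\<in>{N..<t}. (\<eta> k)\<^sup>2) \<le> gam * (\<Sum>k=1..t. (\<eta> k)\<^sup>2)"
        using gam_pos by (intro mult_left_mono) auto
      then show ?thesis using tail[of t] False by simp
    qed
  qed
  then show ?thesis using C0nn by blast
qed

lemma main:
  "\<exists>C \<gamma>. 0 < C \<and> 0 < \<gamma> \<and>
    (\<forall>t\<ge>1.
      (\<integral>\<^sup>+\<omega>. ennreal ((norm (ogd \<phi>' \<Phi> \<eta> (\<lambda>k. Z k \<omega>) t - fH))\<^sup>2) \<partial>P)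
        \<le> ennreal (C + \<gamma> * (\<Sum>k=1..t. (\<eta> k)\<^sup>2))
      \<and> (\<integral>\<^sup>+\<omega>. ennreal (gen_err \<rho> \<phi> \<Phi> (ogd \<phi>' \<Phi> \<eta> (\<lambda>k. Z k \<omega>) t) - gen_err \<rho> \<phi> \<Phi> fH) \<partial>P)\<^sup>2
        \<le> ennreal (C + \<gamma> * (\<Sum>k=1..t. (\<eta> k)\<^sup>2))
           * (\<integral>\<^sup>+\<omega>. ennreal ((norm (grad_err \<rho> \<phi>' \<Phi> (ogd \<phi>' \<Phi> \<eta> (\<lambda>k. Z k \<omega>) t)))\<^sup>2) \<partial>P))"
proof -
  obtain C0 where C0: "0 \<le> C0" "\<And>t. t \<ge> 1 \<Longrightarrow> Dn t \<le> C0 + gam * (\<Sum>k=1..t. (\<eta> k)\<^sup>2)"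
    using Dn_final by blast
  define C where "C = C0 + 1"
  have Cpos: "0 < C" using C0 unfolding C_def by simp
  have gpos: "0 < gam" using gam_pos by simp
  have first: "(\<integral>\<^sup>+\<omega>. ennreal ((norm (ft \<omega> t - fH))\<^sup>2) \<partial>P) \<le> ennreal (C + gam * (\<Sum>k=1..t. (\<eta> k)\<^sup>2))"
    if t: "t \<ge> 1" for t
    unfolding Dn_nn using C0(2)[OF t] unfolding C_def by (intro ennreal_leI) simp
  have second: "(\<integral>\<^sup>+\<omega>. ennreal (gen_err \<rho> \<phi> \<Phi> (ft \<omega> t) - gen_err \<rho> \<phi> \<Phi> fH) \<partial>P)\<^sup>2
        \<le> ennreal (C + gam * (\<Sum>k=1..t. (\<eta> k)\<^sup>2))
           * (\<integral>\<^sup>+\<omega>. ennreal ((norm (grad_err \<rho> \<phi>' \<Phi> (ft \<omega> t)))\<^sup>2) \<partial>P)"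
    if t: "t \<ge> 1" for t
  proof -
    define e where "e \<omega> = norm (ft \<omega> t - fH)" for \<omega>
    define G where "G \<omega> = norm (grad_err \<rho> \<phi>' \<Phi> (ft \<omega> t))" for \<omega>
    define D where "D \<omega> = gen_err \<rho> \<phi> \<Phi> (ft \<omega> t) - gen_err \<rho> \<phi> \<Phi> fH" for \<omega>
    define h where "h \<omega> = max 0 (D \<omega>) / e \<omega>" for \<omega>
    have DGe: "D \<omega> \<le> G \<omega> * e \<omega>" for \<omega> unfolding D_def G_def e_def by (rule grad_ineq)
    have e0: "0 \<le> e \<omega>" for \<omega> unfolding e_def by simp
    have G0: "0 \<le> G \<omega>" for \<omega> unfolding G_def by simp
    have h0: "0 \<le> h \<omega>" for \<omega> unfolding h_def using e0 by simp
    have hG: "h \<omega> \<le> G \<omega>" for \<omega>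
    proof (cases "e \<omega> = 0")
      case True then show ?thesis unfolding h_def using G0 by simp
    next
      case False
      then have ep: "0 < e \<omega>" using e0[of \<omega>] by simp
      have "max 0 (D \<omega>) \<le> G \<omega> * e \<omega>" using DGe[of \<omega>] G0[of \<omega>] e0[of \<omega>] by simp
      then show ?thesis unfolding h_def using ep by (simp add: pos_divide_le_eq)
    qed
    have Deh: "ennreal (D \<omega>) = ennreal (e \<omega>) * ennreal (h \<omega>)" for \<omega>
    proof (cases "e \<omega> = 0")
      case True
      then have "D \<omega> \<le> 0" using DGe[of \<omega>] by simp
      then show ?thesis using True by (simp add: ennreal_neg)
    next
      case False
      then have eh: "e \<omega> * h \<omega> = max 0 (D \<omega>)" unfolding h_def by simp
      have "ennreal (e \<omega>) * ennreal (h \<omega>) = ennreal (e \<omega> * h \<omega>)"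
        using ennreal_mult'[OF e0[of \<omega>], of "h \<omega>"] by simp
      also have "\<dots> = ennreal (max 0 (D \<omega>))" by (simp only: eh)
      also have "\<dots> = ennreal (D \<omega>)" by (cases "D \<omega> \<le> 0") (auto simp: ennreal_neg max_def)
      finally show ?thesis by simp
    qed
    have em: "e \<in> borel_measurable P" unfolding e_def
      by (intro measurable_compose[OF _ borel_measurable_norm] borel_measurable_diff ogd_meas borel_measurable_const)
    have Dm: "D \<in> borel_measurable P" unfolding D_def
      by (intro borel_measurable_diff generr_meas borel_measurable_const)
    have hm: "h \<in> borel_measurable P" unfolding h_def
      by (intro borel_measurable_divide borel_measurable_max borel_measurable_const Dm em)
    have "(\<integral>\<^sup>+\<omega>. ennreal (D \<omega>) \<partial>P)\<^sup>2 = (\<integral>\<^sup>+\<omega>. ennreal (e \<omega>) * ennreal (h \<omega>) \<partial>P)\<^sup>2"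
      by (simp add: Deh)
    also have "\<dots> \<le> (\<integral>\<^sup>+\<omega>. ennreal (e \<omega>) ^ 2 \<partial>P) * (\<integral>\<^sup>+\<omega>. ennreal (h \<omega>) ^ 2 \<partial>P)"
      by (rule Cauchy_Schwarz_nn_integral)
         (auto intro: measurable_compose[OF em measurable_ennreal] measurable_compose[OF hm measurable_ennreal])
    also have "(\<integral>\<^sup>+\<omega>. ennreal (e \<omega>) ^ 2 \<partial>P) = (\<integral>\<^sup>+\<omega>. ennreal ((norm (ft \<omega> t - fH))\<^sup>2) \<partial>P)"
      unfolding e_def by (simp add: ennreal_power)
    also have "(\<integral>\<^sup>+\<omega>. ennreal (h \<omega>) ^ 2 \<partial>P) \<le> (\<integral>\<^sup>+\<omega>. ennreal ((norm (grad_err \<rho> \<phi>' \<Phi> (ft \<omega> t)))\<^sup>2) \<partial>P)"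
    proof (rule nn_integral_mono)
      fix \<omega>
      have "(h \<omega>)\<^sup>2 \<le> (G \<omega>)\<^sup>2" using h0 hG by (intro power_mono) auto
      then show "ennreal (h \<omega>) ^ 2 \<le> ennreal ((norm (grad_err \<rho> \<phi>' \<Phi> (ft \<omega> t)))\<^sup>2)"
        using h0[of \<omega>] unfolding G_def by (simp add: ennreal_power ennreal_leI)
    qed
    then have "(\<integral>\<^sup>+\<omega>. ennreal ((norm (ft \<omega> t - fH))\<^sup>2) \<partial>P) * (\<integral>\<^sup>+\<omega>. ennreal (h \<omega>) ^ 2 \<partial>P)
      \<le> ennreal (C + gam * (\<Sum>k=1..t. (\<eta> k)\<^sup>2)) * (\<integral>\<^sup>+\<omega>. ennreal ((norm (grad_err \<rho> \<phi>' \<Phi> (ft \<omega> t)))\<^sup>2) \<partial>P)"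
      using first[OF t] by (intro mult_mono) auto
    finally show ?thesis unfolding D_def .
  qed
  show ?thesis using Cpos gpos first second by blast
qed

end

theorem lemma4:
  fixes X :: "'a::euclidean_space set" and Y :: "real set"
    and \<rho> :: "('a \<times> real) measure"
    and \<Phi> :: "'a \<Rightarrow> 'h::{real_inner, complete_space, second_countable_topology}"
    and \<phi> \<phi>' :: "real \<Rightarrow> real \<Rightarrow> real"
    and fH :: 'h and \<eta> :: "nat \<Rightarrow> real" and \<alpha> L :: real
    and P :: "'w measure" and Z :: "nat \<Rightarrow> 'w \<Rightarrow> 'a \<times> real"
  assumes rho_prob: "prob_space \<rho>"
    and rho_sets: "sets \<rho> = sets (restrict_space borel (X \<times> Y))"
    and K_cont: "continuous_on (X \<times> X) (\<lambda>p. inner (\<Phi> (fst p)) (\<Phi> (snd p)))"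
    and K_dense: "closure (span (\<Phi> ` X)) = UNIV"
    and kappa: "\<exists>\<kappa>. \<forall>x\<in>X. norm (\<Phi> x) \<le> \<kappa>"
    and phi_meas: "(\<lambda>p. \<phi> (fst p) (snd p)) \<in> borel_measurable (restrict_space borel (Y \<times> UNIV))"
    and phi_nonneg: "\<forall>y\<in>Y. \<forall>s. 0 \<le> \<phi> y s"
    and phi_deriv: "\<forall>y\<in>Y. \<forall>s. (\<phi> y has_real_derivative \<phi>' y s) (at s)"
    and phi_convex: "\<forall>y\<in>Y. convex_on UNIV (\<phi> y)"
    and alpha: "0 < \<alpha>" "\<alpha> \<le> 1" and L: "0 < L"
    and holder: "\<forall>y\<in>Y. \<forall>s s'. \<bar>\<phi>' y s - \<phi>' y s'\<bar> \<le> L * \<bar>s - s'\<bar> powr \<alpha>"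
    and fH_min: "\<forall>f. gen_err \<rho> \<phi> \<Phi> fH \<le> gen_err \<rho> \<phi> \<Phi> f"
    and bounded: "\<exists>B. (\<forall>y\<in>Y. \<phi> y 0 \<le> B) \<and> (\<forall>x\<in>X. \<forall>y\<in>Y. \<phi> y (inner fH (\<Phi> x)) \<le> B)"
    and P_prob: "prob_space P"
    and Z_indep: "prob_space.indep_vars P (\<lambda>_. \<rho>) Z UNIV"
    and Z_distr: "\<forall>t. distr P \<rho> (Z t) = \<rho>"
    and eta_pos: "\<forall>t. 0 < \<eta> t"
    and eta_lim: "\<eta> \<longlonglongrightarrow> 0"
  shows "\<exists>C \<gamma>. 0 < C \<and> 0 < \<gamma> \<and>
    (\<forall>t\<ge>1.
      (\<integral>\<^sup>+\<omega>. ennreal ((norm (ogd \<phi>' \<Phi> \<eta> (\<lambda>k. Z k \<omega>) t - fH))\<^sup>2) \<partial>P)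
        \<le> ennreal (C + \<gamma> * (\<Sum>k=1..t. (\<eta> k)\<^sup>2))
      \<and> (\<integral>\<^sup>+\<omega>. ennreal (gen_err \<rho> \<phi> \<Phi> (ogd \<phi>' \<Phi> \<eta> (\<lambda>k. Z k \<omega>) t) - gen_err \<rho> \<phi> \<Phi> fH) \<partial>P)\<^sup>2
        \<le> ennreal (C + \<gamma> * (\<Sum>k=1..t. (\<eta> k)\<^sup>2))
           * (\<integral>\<^sup>+\<omega>. ennreal ((norm (grad_err \<rho> \<phi>' \<Phi> (ogd \<phi>' \<Phi> \<eta> (\<lambda>k. Z k \<omega>) t)))\<^sup>2) \<partial>P))"
  proof -
  have "ogd_setting X Y \<rho> \<Phi> \<phi> \<phi>' fH \<eta> \<alpha> L P Z"
    unfolding ogd_setting_def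
    by (intro conjI rho_prob rho_sets K_cont kappa phi_meas phi_nonneg phi_deriv phi_convex alpha L holder
        fH_min bounded P_prob Z_indep Z_distr eta_pos eta_lim)
  then show ?thesis by (rule ogd_setting.main)
qed

end
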